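(* Let $K,N$ be symmetric homogeneous stable means and $M$ a symmetric homogeneous mean, all having symmetric asymptotic expansions with coefficients $(a^K_n),(a^N_n),(a^M_n)$. If $M$ is simultaneously $(K,N)$-stabilized and $(N,K)$-stabilized, then either $a^K_1=a^N_1$, or $a^K_1+a^N_1=-1$. In the first case $a^M_1=a^K_1=a^N_1$ and $a^M_2=\frac16a^M_1(1+a^M_1)(1-4a^M_1)$; in the second case $a^M_1=-\frac12$ and $a^M_2=-\frac18$.
   Context: A bi-variate mean is $M:(0,\infty)^2\to(0,\infty)$ with $\min\le M\le\max$; symmetric and homogeneous (degree 1). $M$ is stable if $M(s,t)=M\big(M(s,M(s,t)),M(M(s,t),t)\big)$. For stable means $K,N$, $M$ is $(K,N)$-stabilized if $M(s,t)=K\big(N(s,M(s,t)),N(M(s,t),t)\big)$ for all $s,t>0$. A mean has a symmetric asymptotic expansion with coefficients $(a_n)$ if for every fixed real $t$ and $N\ge0$, $M(x-t,x+t)=\sum_{n=0}^Na_nt^{2n}x^{-2n+1}+o(x^{-2N+1})$ as $x\to\infty$. *)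

theory Defs
  imports "HOL-Analysis.Analysis" "HOL-Library.Landau_Symbols"
begin

definition is_mean :: "(real \<Rightarrow> real \<Rightarrow> real) \<Rightarrow> bool" where
  "is_mean M \<longleftrightarrow> (\<forall>s>0. \<forall>t>0. M s t > 0 \<and> min s t \<le> M s t \<and> M s t \<le> max s t)"

definition symmetric_mean :: "(real \<Rightarrow> real \<Rightarrow> real) \<Rightarrow> bool" where
  "symmetric_mean M \<longleftrightarrow> (\<forall>s>0. \<forall>t>0. M s t = M t s)"

definition homogeneous_mean :: "(real \<Rightarrow> real \<Rightarrow> real) \<Rightarrow> bool" where
  "homogeneous_mean M \<longleftrightarrow> (\<forall>l>0. \<forall>s>0. \<forall>t>0. M (l * s) (l * t) = l * M s t)"

definition stable_mean :: "(real \<Rightarrow> real \<Rightarrow> real) \<Rightarrow> bool" where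
  "stable_mean M \<longleftrightarrow> (\<forall>s>0. \<forall>t>0. M s t = M (M s (M s t)) (M (M s t) t))"

definition stabilized :: "(real \<Rightarrow> real \<Rightarrow> real) \<Rightarrow> (real \<Rightarrow> real \<Rightarrow> real) \<Rightarrow>
    (real \<Rightarrow> real \<Rightarrow> real) \<Rightarrow> bool" where
  "stabilized K N M \<longleftrightarrow> (\<forall>s>0. \<forall>t>0. M s t = K (N s (M s t)) (N (M s t) t))"

definition sym_asymp_expansion :: "(real \<Rightarrow> real \<Rightarrow> real) \<Rightarrow> (nat \<Rightarrow> real) \<Rightarrow> bool" where
  "sym_asymp_expansion M a \<longleftrightarrow>
     (\<forall>t::real. \<forall>N::nat.
        (\<lambda>x. M (x - t) (x + t) - (\<Sum>n\<le>N. a n * t ^ (2 * n) * x powr (1 - 2 * real n)))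
          \<in> o[at_top](\<lambda>x. x powr (1 - 2 * real N)))"

end

theory Submission
  imports Defs
begin

definition jet :: "(real \<Rightarrow> real) \<Rightarrow> real \<Rightarrow> real \<Rightarrow> real \<Rightarrow> real \<Rightarrow> real \<Rightarrow> bool" where
  "jet g c0 c1 c2 c3 c4 \<longleftrightarrow>
     ((\<lambda>h. (g h - (c0 + c1*h + c2*h^2 + c3*h^3 + c4*h^4)) / h^4) \<longlongrightarrow> 0) (at 0)"

lemma jet_tendsto:
  assumes "jet g c0 c1 c2 c3 c4"
  shows "(g \<longlongrightarrow> c0) (at 0)"
proof -
  let ?E = "\<lambda>h. (g h - (c0 + c1*h + c2*h^2 + c3*h^3 + c4*h^4)) / h^4"
  have E: "(?E \<longlongrightarrow> 0) (at 0)" using assms unfolding jet_def .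
  have "((\<lambda>h. (c0 + c1*h + c2*h^2 + c3*h^3 + c4*h^4) + h^4 * ?E h) \<longlongrightarrow>
        (c0 + c1*0 + c2*0^2 + c3*0^3 + c4*0^4) + 0^4 * 0) (at 0)"
    by (intro tendsto_intros E) 
  then have "((\<lambda>h. (c0 + c1*h + c2*h^2 + c3*h^3 + c4*h^4) + h^4 * ?E h) \<longlongrightarrow> c0) (at 0)"
    by simp
  moreover have "\<forall>\<^sub>F h in at 0. (c0 + c1*h + c2*h^2 + c3*h^3 + c4*h^4) + h^4 * ?E h = g h"
    using eventually_at_filter by (auto simp: eventually_at_filter)
  ultimately show ?thesis by (rule Lim_transform_eventually)
qed

lemma jet_cong_ev:
  assumes "jet g c0 c1 c2 c3 c4" "\<forall>\<^sub>F h in at 0. g h = f h"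
  shows "jet f c0 c1 c2 c3 c4"
  using assms(1) unfolding jet_def
  by (rule Lim_transform_eventually) (use assms(2) in \<open>auto elim: eventually_mono\<close>)

lemma jet_coeffs:
  assumes "jet g c0 c1 c2 c3 c4" "c0 = d0" "c1 = d1" "c2 = d2" "c3 = d3" "c4 = d4"
  shows "jet g d0 d1 d2 d3 d4"
  using assms by simp

lemma jet_const: "jet (\<lambda>h. c) c 0 0 0 0"
  unfolding jet_def by simp

lemma jet_id: "jet (\<lambda>h. h) 0 1 0 0 0"
  unfolding jet_def by simp

lemma jet_add:
  assumes "jet f a0 a1 a2 a3 a4" "jet g b0 b1 b2 b3 b4"
  shows "jet (\<lambda>h. f h + g h) (a0+b0) (a1+b1) (a2+b2) (a3+b3) (a4+b4)"
proof -
  have "((\<lambda>h. (f h - (a0 + a1*h + a2*h^2 + a3*h^3 + a4*h^4)) / h^4 +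
              (g h - (b0 + b1*h + b2*h^2 + b3*h^3 + b4*h^4)) / h^4) \<longlongrightarrow> 0 + 0) (at 0)"
    using assms unfolding jet_def by (intro tendsto_add)
  then show ?thesis unfolding jet_def
    by (simp add: add_divide_distrib[symmetric] algebra_simps)
qed

lemma jet_cmult:
  assumes "jet g b0 b1 b2 b3 b4"
  shows "jet (\<lambda>h. k * g h) (k*b0) (k*b1) (k*b2) (k*b3) (k*b4)"
proof -
  have "((\<lambda>h. k * ((g h - (b0 + b1*h + b2*h^2 + b3*h^3 + b4*h^4)) / h^4)) \<longlongrightarrow> k * 0) (at 0)"
    using assms unfolding jet_def by (intro tendsto_mult tendsto_const)
  then show ?thesis unfolding jet_def
    by (simp add: algebra_simps)
qed

lemma jet_mult:
  assumes "jet f a0 a1 a2 a3 a4" "jet g b0 b1 b2 b3 b4"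
  shows "jet (\<lambda>h. f h * g h) (a0*b0) (a0*b1+a1*b0) (a0*b2+a1*b1+a2*b0)
           (a0*b3+a1*b2+a2*b1+a3*b0) (a0*b4+a1*b3+a2*b2+a3*b1+a4*b0)"
proof -
  define P where "P h = a0 + a1*h + a2*h^2 + a3*h^3 + a4*h^4" for h :: real
  define Q where "Q h = b0 + b1*h + b2*h^2 + b3*h^3 + b4*h^4" for h :: real
  define E where "E h = (f h - P h) / h^4" for h
  define F where "F h = (g h - Q h) / h^4" for h
  define H where "H h = (a1*b4+a2*b3+a3*b2+a4*b1) + (a2*b4+a3*b3+a4*b2)*h + (a3*b4+a4*b3)*h^2
      + (a4*b4)*h^3" for h :: real
  have E: "(E \<longlongrightarrow> 0) (at 0)" using assms(1) unfolding jet_def E_def P_def .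
  have F: "(F \<longlongrightarrow> 0) (at 0)" using assms(2) unfolding jet_def F_def Q_def .
  have "((\<lambda>h. h * H h + E h * Q h + F h * P h + h^4 * E h * F h) \<longlongrightarrow>
      0 * H 0 + 0 * Q 0 + 0 * P 0 + 0^4 * 0 * 0) (at 0)"
    unfolding H_def P_def Q_def by (intro tendsto_intros E F)
  then have lim: "((\<lambda>h. h * H h + E h * Q h + F h * P h + h^4 * E h * F h) \<longlongrightarrow> 0) (at 0)"
    by simp
  have "\<forall>\<^sub>F h in at 0. h * H h + E h * Q h + F h * P h + h^4 * E h * F h =
     (f h * g h - ((a0*b0) + (a0*b1+a1*b0)*h + (a0*b2+a1*b1+a2*b0)*h^2
           + (a0*b3+a1*b2+a2*b1+a3*b0)*h^3 + (a0*b4+a1*b3+a2*b2+a3*b1+a4*b0)*h^4)) / h^4"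
  proof (rule eventually_mono[OF eventually_neq_at_within[of 0 0 UNIV]])
    fix h :: real assume h: "h \<noteq> 0"
    have fe: "f h = P h + h^4 * E h" and ge: "g h = Q h + h^4 * F h"
      using h by (simp_all add: E_def F_def)
    show "h * H h + E h * Q h + F h * P h + h^4 * E h * F h =
     (f h * g h - ((a0*b0) + (a0*b1+a1*b0)*h + (a0*b2+a1*b1+a2*b0)*h^2
           + (a0*b3+a1*b2+a2*b1+a3*b0)*h^3 + (a0*b4+a1*b3+a2*b2+a3*b1+a4*b0)*h^4)) / h^4"
      unfolding fe ge using h
      by (simp add: field_simps P_def Q_def H_def) algebra
  qed
  from Lim_transform_eventually[OF lim this] show ?thesis unfolding jet_def .
qed

lemma jet_div_h:
  assumes "jet q 0 c1 c2 c3 c4"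
  shows "((\<lambda>h. q h / h) \<longlongrightarrow> c1) (at 0)"
proof -
  define E where "E h = (q h - (0 + c1*h + c2*h^2 + c3*h^3 + c4*h^4)) / h^4" for h
  have E: "(E \<longlongrightarrow> 0) (at 0)" using assms unfolding jet_def E_def .
  have "((\<lambda>h. c1 + c2*h + c3*h^2 + c4*h^3 + h^3 * E h) \<longlongrightarrow> c1 + c2*0 + c3*0^2 + c4*0^3 + 0^3*0) (at 0)"
    by (intro tendsto_intros E)
  then have lim: "((\<lambda>h. c1 + c2*h + c3*h^2 + c4*h^3 + h^3 * E h) \<longlongrightarrow> c1) (at 0)" by simp
  have "\<forall>\<^sub>F h in at 0. c1 + c2*h + c3*h^2 + c4*h^3 + h^3 * E h = q h / h"
  proof (rule eventually_mono[OF eventually_neq_at_within[of 0 0 UNIV]])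
    fix h :: real assume h: "h \<noteq> 0"
    show "c1 + c2*h + c3*h^2 + c4*h^3 + h^3 * E h = q h / h"
      using h by (simp add: E_def field_simps) algebra
  qed
  from Lim_transform_eventually[OF lim this] show ?thesis .
qed

lemma jet_zeroI:
  assumes "((\<lambda>h. g h / h^4) \<longlongrightarrow> 0) (at 0)"
  shows "jet g 0 0 0 0 0"
  using assms unfolding jet_def by simp

lemma jet_diff:
  assumes "jet f a0 a1 a2 a3 a4" "jet g b0 b1 b2 b3 b4"
  shows "jet (\<lambda>h. f h - g h) (a0-b0) (a1-b1) (a2-b2) (a3-b3) (a4-b4)"
  using jet_add[OF assms(1) jet_cmult[OF assms(2), of "-1"]] by simp

lemma jet_inverse:
  assumes g: "jet g 1 c1 c2 c3 c4"
  shows "jet (\<lambda>h. 1 / g h) 1 (-c1) (c1^2-c2) (-c3+2*c1*c2-c1^3)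
            (-c4 + c2^2 + 2*c1*c3 - 3*c1^2*c2 + c1^4)"
proof -
  define x where "x h = g h - 1" for h
  have x: "jet x 0 c1 c2 c3 c4" unfolding x_def using jet_diff[OF g jet_const[of 1]] by simp
  have x2: "jet (\<lambda>h. x h * x h) 0 0 (c1*c1) (c1*c2+c2*c1) (c1*c3+c2*c2+c3*c1)"
    using jet_mult[OF x x] by simp
  have x3: "jet (\<lambda>h. x h * x h * x h) 0 0 0 (c1*c1*c1) (c1*c1*c2 + (c1*c2+c2*c1)*c1)"
    using jet_mult[OF x2 x] by simp
  have x4: "jet (\<lambda>h. x h * x h * x h * x h) 0 0 0 0 (c1*c1*c1*c1)"
    using jet_mult[OF x3 x] by simp
  have gl: "(g \<longlongrightarrow> 1) (at 0)" by (rule jet_tendsto[OF g])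
  have "((\<lambda>h. h * (x h / h)^5 / g h) \<longlongrightarrow> 0 * c1^5 / 1) (at 0)"
    by (intro tendsto_intros jet_div_h[OF x] gl) simp
  then have l0: "((\<lambda>h. h * (x h / h)^5 / g h) \<longlongrightarrow> 0) (at 0)" by simp
  have "\<forall>\<^sub>F h in at 0. h * (x h / h)^5 / g h = (x h ^ 5 / g h) / h^4"
  proof (rule eventually_mono[OF eventually_neq_at_within[of 0 0 UNIV]])
    fix h :: real assume "h \<noteq> 0"
    then show "h * (x h / h)^5 / g h = (x h ^ 5 / g h) / h^4"
      by (simp add: power_divide eval_nat_numeral)
  qed
  from Lim_transform_eventually[OF l0 this]
  have "((\<lambda>h. (x h ^ 5 / g h) / h^4) \<longlongrightarrow> 0) (at 0)" .
  then have y: "jet (\<lambda>h. x h ^ 5 / g h) 0 0 0 0 0" by (rule jet_zeroI)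
  have s: "jet (\<lambda>h. 1 - x h + x h * x h - x h * x h * x h + x h * x h * x h * x h - x h ^ 5 / g h)
    (1 - 0 + 0 - 0 + 0 - 0) (0 - c1 + 0 - 0 + 0 - 0) (0 - c2 + c1*c1 - 0 + 0 - 0)
    (0 - c3 + (c1*c2+c2*c1) - c1*c1*c1 + 0 - 0)
    (0 - c4 + (c1*c3+c2*c2+c3*c1) - (c1*c1*c2 + (c1*c2+c2*c1)*c1) + c1*c1*c1*c1 - 0)"
    by (intro jet_diff jet_add jet_const x x2 x3 x4 y)
  have ne: "\<forall>\<^sub>F h in at 0. g h \<noteq> 0"
    using tendsto_imp_eventually_ne[OF gl] by simp
  have "\<forall>\<^sub>F h in at 0. 1 - x h + x h * x h - x h * x h * x h + x h * x h * x h * x h - x h ^ 5 / g h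
        = 1 / g h"
  proof (rule eventually_mono[OF ne])
    fix h assume h: "g h \<noteq> 0"
    have gx: "g h = 1 + x h" by (simp add: x_def)
    show "1 - x h + x h * x h - x h * x h * x h + x h * x h * x h * x h - x h ^ 5 / g h = 1 / g h"
      using h unfolding gx by (simp add: field_simps) algebra
  qed
  from jet_cong_ev[OF s this] show ?thesis
    by (rule jet_coeffs) (simp_all add: power2_eq_square power3_eq_cube power4_eq_xxxx algebra_simps)
qed

lemma jet_compose:
  assumes q: "jet q 0 c1 c2 c3 c4"
    and f: "\<And>x. f x = 1 + p2*x^2 + p4*x^4 + x^4 * r x"
    and r: "isCont r 0" "r 0 = 0"
  shows "jet (\<lambda>h. f (q h)) 1 0 (p2*c1^2) (2*p2*c1*c2) (p2*(c2^2+2*c1*c3) + p4*c1^4)"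
proof -
  have q2: "jet (\<lambda>h. q h * q h) 0 0 (c1*c1) (c1*c2+c2*c1) (c1*c3+c2*c2+c3*c1)"
    using jet_mult[OF q q] by simp
  have q4: "jet (\<lambda>h. q h * q h * (q h * q h)) 0 0 0 0 (c1*c1*(c1*c1))"
    using jet_mult[OF q2 q2] by simp
  have ql: "(q \<longlongrightarrow> 0) (at 0)" by (rule jet_tendsto[OF q])
  have rl: "((\<lambda>h. r (q h)) \<longlongrightarrow> 0) (at 0)"
    using isCont_tendsto_compose[OF r(1) ql] r(2) by simp
  have "((\<lambda>h. (q h / h)^4 * r (q h)) \<longlongrightarrow> c1^4 * 0) (at 0)"
    by (intro tendsto_intros jet_div_h[OF q] rl)
  then have "((\<lambda>h. (q h ^ 4 * r (q h)) / h^4) \<longlongrightarrow> 0) (at 0)"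
    by (simp add: power_divide)
  then have y: "jet (\<lambda>h. q h ^ 4 * r (q h)) 0 0 0 0 0" by (rule jet_zeroI)
  have s: "jet (\<lambda>h. 1 + p2 * (q h * q h) + p4 * (q h * q h * (q h * q h)) + q h ^ 4 * r (q h))
     (1 + p2*0 + p4*0 + 0) (0 + p2*0 + p4*0 + 0) (0 + p2*(c1*c1) + p4*0 + 0)
     (0 + p2*(c1*c2+c2*c1) + p4*0 + 0) (0 + p2*(c1*c3+c2*c2+c3*c1) + p4*(c1*c1*(c1*c1)) + 0)"
    by (intro jet_add jet_cmult jet_const q2 q4 y)
  have "\<forall>\<^sub>F h in at 0. 1 + p2 * (q h * q h) + p4 * (q h * q h * (q h * q h)) + q h ^ 4 * r (q h)
        = f (q h)"
    by (simp add: f power2_eq_square power4_eq_xxxx)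
  from jet_cong_ev[OF s this] show ?thesis
    by (rule jet_coeffs) (simp_all add: power2_eq_square power4_eq_xxxx algebra_simps)
qed

lemma peel:
  fixes a L :: real and R :: "real \<Rightarrow> real"
  assumes "((\<lambda>h. (a + h * R h) / h^m) \<longlongrightarrow> 0) (at 0)" "(R \<longlongrightarrow> L) (at 0)" "m > 0"
  shows "a = 0 \<and> ((\<lambda>h. R h / h^(m-1)) \<longlongrightarrow> 0) (at 0)"
proof -
  have "((\<lambda>h::real. h^m) \<longlongrightarrow> 0^m) (at 0)" by (intro tendsto_intros)
  from tendsto_mult[OF this assms(1)]
  have "((\<lambda>h. h^m * ((a + h * R h) / h^m)) \<longlongrightarrow> 0^m * 0) (at 0)" .
  then have l1: "((\<lambda>h. h^m * ((a + h * R h) / h^m)) \<longlongrightarrow> 0) (at 0)" by simp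
  have "\<forall>\<^sub>F h in at 0. h^m * ((a + h * R h) / h^m) = a + h * R h"
    by (rule eventually_mono[OF eventually_neq_at_within[of 0 0 UNIV]]) simp
  from Lim_transform_eventually[OF l1 this] have l2: "((\<lambda>h. a + h * R h) \<longlongrightarrow> 0) (at 0)" .
  have "((\<lambda>h. a + h * R h) \<longlongrightarrow> a + 0 * L) (at 0)" by (intro tendsto_intros assms(2))
  then have "((\<lambda>h. a + h * R h) \<longlongrightarrow> a) (at 0)" by simp
  from tendsto_unique[OF _ this l2] have a: "a = 0" by simp
  have "\<forall>\<^sub>F h in at 0. (a + h * R h) / h^m = R h / h^(m-1)"
  proof (rule eventually_mono[OF eventually_neq_at_within[of 0 0 UNIV]])
    fix h :: real assume "h \<noteq> 0"
    moreover have "h^m = h * h^(m-1)" using assms(3) by (cases m) auto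
    ultimately show "(a + h * R h) / h^m = R h / h^(m-1)" by (simp add: a)
  qed
  from Lim_transform_eventually[OF assms(1) this] a show ?thesis by simp
qed

lemma jet_unique:
  assumes "jet g c0 c1 c2 c3 c4" "jet g d0 d1 d2 d3 d4"
  shows "c0 = d0 \<and> c1 = d1 \<and> c2 = d2 \<and> c3 = d3 \<and> c4 = d4"
proof -
  have j: "jet (\<lambda>h. g h - g h) (c0-d0) (c1-d1) (c2-d2) (c3-d3) (c4-d4)"
    by (rule jet_diff[OF assms])
  define e0 where "e0 = d0 - c0"
  define e1 where "e1 = d1 - c1"
  define e2 where "e2 = d2 - c2"
  define e3 where "e3 = d3 - c3"
  define e4 where "e4 = d4 - c4"
  have "((\<lambda>h. (e0 + h * (e1 + h * (e2 + h * (e3 + h * e4)))) / h^4) \<longlongrightarrow> 0) (at 0)"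
    using j unfolding jet_def e0_def e1_def e2_def e3_def e4_def
    by (simp add: algebra_simps power2_eq_square power3_eq_cube power4_eq_xxxx)
  note s0 = this
  have "((\<lambda>h. e1 + h * (e2 + h * (e3 + h * e4))) \<longlongrightarrow> e1 + 0 * (e2 + 0 * (e3 + 0 * e4))) (at 0)"
    by (intro tendsto_intros)
  from peel[OF s0 this] have "e0 = 0" and
    s1: "((\<lambda>h. (e1 + h * (e2 + h * (e3 + h * e4))) / h^3) \<longlongrightarrow> 0) (at 0)" by simp_all
  have "((\<lambda>h. e2 + h * (e3 + h * e4)) \<longlongrightarrow> e2 + 0 * (e3 + 0 * e4)) (at 0)"
    by (intro tendsto_intros)
  from peel[OF s1 this] have "e1 = 0" and
    s2: "((\<lambda>h. (e2 + h * (e3 + h * e4)) / h^2) \<longlongrightarrow> 0) (at 0)" by simp_all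
  have "((\<lambda>h. e3 + h * e4) \<longlongrightarrow> e3 + 0 * e4) (at 0)"
    by (intro tendsto_intros)
  from peel[OF s2 this] have "e2 = 0" and
    s3: "((\<lambda>h. (e3 + h * e4) / h^1) \<longlongrightarrow> 0) (at 0)" by simp_all
  from peel[OF s3 tendsto_const] have "e3 = 0" and s4: "((\<lambda>h. e4 / h^0) \<longlongrightarrow> 0) (at 0)"
    by simp_all
  from s4 have "e4 = 0" by (simp add: tendsto_const_iff)
  with \<open>e0 = 0\<close> \<open>e1 = 0\<close> \<open>e2 = 0\<close> \<open>e3 = 0\<close> show ?thesis
    by (simp add: e0_def e1_def e2_def e3_def e4_def)
qed

lemma jet_div:
  assumes f: "jet f a0 a1 a2 a3 a4" and g: "jet g 1 c1 c2 c3 c4"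
  shows "jet (\<lambda>h. f h / g h) (a0*1) (a0*(-c1)+a1*1) (a0*(c1^2-c2)+a1*(-c1)+a2*1)
           (a0*(-c3+2*c1*c2-c1^3)+a1*(c1^2-c2)+a2*(-c1)+a3*1)
           (a0*(-c4 + c2^2 + 2*c1*c3 - 3*c1^2*c2 + c1^4)+a1*(-c3+2*c1*c2-c1^3)+a2*(c1^2-c2)+a3*(-c1)+a4*1)"
  using jet_mult[OF f jet_inverse[OF g]] by simp

lemma core:
  fixes fK fN rK rN m :: "real \<Rightarrow> real" and a b k1 k2 n1 n2 :: real
  assumes fK: "\<And>x. fK x = 1 + k1*x^2 + k2*x^4 + x^4 * rK x" and rK: "isCont rK 0" "rK 0 = 0"
    and fN: "\<And>x. fN x = 1 + n1*x^2 + n2*x^4 + x^4 * rN x" and rN: "isCont rN 0" "rN 0 = 0"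
    and jm: "jet m 1 0 a 0 b"
    and eq: "\<forall>\<^sub>F h in at 0. m h =
      (let N1 = 1/2 * ((1 - h) + m h) * fN ((1/2 * (m h - (1 - h))) / (1/2 * ((1 - h) + m h)));
           N2 = 1/2 * (m h + (1 + h)) * fN ((1/2 * ((1 + h) - m h)) / (1/2 * (m h + (1 + h))))
       in 1/2 * (N1 + N2) * fK ((1/2 * (N2 - N1)) / (1/2 * (N1 + N2))))"
  shows "a = 1/4*n1 + 1/4*k1 + 1/2*a \<and> b = 1/16*n2 + 1/16*n1 + 1/16*k2 - 3/16*k1*n1 + 1/2*b + 1/8*a*n1 - 1/8*a*k1 - 1/2*a*k1*n1 + 1/4*a^2*n1"
proof -
  define u where "u = (\<lambda>h::real. 1 - h)"
  define v where "v = (\<lambda>h::real. 1 + h)"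
  define A1 where "A1 = (\<lambda>h::real. 1/2 * (u h + m h))"
  define D1 where "D1 = (\<lambda>h::real. 1/2 * (m h - u h))"
  define q1 where "q1 = (\<lambda>h::real. D1 h / A1 h)"
  define N1 where "N1 = (\<lambda>h::real. A1 h * fN (q1 h))"
  define A2 where "A2 = (\<lambda>h::real. 1/2 * (m h + v h))"
  define D2 where "D2 = (\<lambda>h::real. 1/2 * (v h - m h))"
  define q2 where "q2 = (\<lambda>h::real. D2 h / A2 h)"
  define N2 where "N2 = (\<lambda>h::real. A2 h * fN (q2 h))"
  define A3 where "A3 = (\<lambda>h::real. 1/2 * (N1 h + N2 h))"
  define D3 where "D3 = (\<lambda>h::real. 1/2 * (N2 h - N1 h))"
  define q3 where "q3 = (\<lambda>h::real. D3 h / A3 h)"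
  define R where "R = (\<lambda>h::real. A3 h * fK (q3 h))"
  have ju: "jet u (1) (-1) 0 0 0" unfolding u_def
    by (rule jet_coeffs[OF jet_diff[OF jet_const jet_id]]) simp_all
  have jv: "jet v (1) (1) 0 0 0" unfolding v_def
    by (rule jet_coeffs[OF jet_add[OF jet_const jet_id]]) simp_all
  have jA1: "jet A1 (1) (-1/2) (1/2*a) 0 (1/2*b)" unfolding A1_def
    by (rule jet_coeffs[OF jet_cmult[OF jet_add[OF ju jm]]]) (simp_all add: field_simps power2_eq_square power3_eq_cube power4_eq_xxxx)
  have jD1: "jet D1 0 (1/2) (1/2*a) 0 (1/2*b)" unfolding D1_def
    by (rule jet_coeffs[OF jet_cmult[OF jet_diff[OF jm ju]]]) (simp_all add: field_simps power2_eq_square power3_eq_cube power4_eq_xxxx)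
  have jq1: "jet q1 0 (1/2) (1/4 + 1/2*a) (1/8) (1/16 + 1/2*b - 1/8*a - 1/4*a^2)" unfolding q1_def
    by (rule jet_coeffs[OF jet_div[OF jD1 jA1]]) (simp_all add: field_simps power2_eq_square power3_eq_cube power4_eq_xxxx)
  have jF1: "jet (\<lambda>h. fN (q1 h)) (1) 0 (1/4*n1) (1/4*n1 + 1/2*a*n1) (1/16*n2 + 3/16*n1 + 1/4*a*n1 + 1/4*a^2*n1)"
    by (rule jet_coeffs[OF jet_compose[OF jq1 fN rN]]) (simp_all add: field_simps power2_eq_square power3_eq_cube power4_eq_xxxx)
  have jN1: "jet N1 (1) (-1/2) (1/4*n1 + 1/2*a) (1/8*n1 + 1/2*a*n1) (1/16*n2 + 1/16*n1 + 1/2*b + 1/8*a*n1 + 1/4*a^2*n1)" unfolding N1_def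
    by (rule jet_coeffs[OF jet_mult[OF jA1 jF1]]) (simp_all add: field_simps power2_eq_square power3_eq_cube power4_eq_xxxx)
  have jA2: "jet A2 (1) (1/2) (1/2*a) 0 (1/2*b)" unfolding A2_def
    by (rule jet_coeffs[OF jet_cmult[OF jet_add[OF jm jv]]]) (simp_all add: field_simps power2_eq_square power3_eq_cube power4_eq_xxxx)
  have jD2: "jet D2 0 (1/2) (-1/2*a) 0 (-1/2*b)" unfolding D2_def
    by (rule jet_coeffs[OF jet_cmult[OF jet_diff[OF jv jm]]]) (simp_all add: field_simps power2_eq_square power3_eq_cube power4_eq_xxxx)
  have jq2: "jet q2 0 (1/2) (-1/4 - 1/2*a) (1/8) (-1/16 - 1/2*b + 1/8*a + 1/4*a^2)" unfolding q2_def
    by (rule jet_coeffs[OF jet_div[OF jD2 jA2]]) (simp_all add: field_simps power2_eq_square power3_eq_cube power4_eq_xxxx)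
  have jF2: "jet (\<lambda>h. fN (q2 h)) (1) 0 (1/4*n1) (-1/4*n1 - 1/2*a*n1) (1/16*n2 + 3/16*n1 + 1/4*a*n1 + 1/4*a^2*n1)"
    by (rule jet_coeffs[OF jet_compose[OF jq2 fN rN]]) (simp_all add: field_simps power2_eq_square power3_eq_cube power4_eq_xxxx)
  have jN2: "jet N2 (1) (1/2) (1/4*n1 + 1/2*a) (-1/8*n1 - 1/2*a*n1) (1/16*n2 + 1/16*n1 + 1/2*b + 1/8*a*n1 + 1/4*a^2*n1)" unfolding N2_def
    by (rule jet_coeffs[OF jet_mult[OF jA2 jF2]]) (simp_all add: field_simps power2_eq_square power3_eq_cube power4_eq_xxxx)
  have jA3: "jet A3 (1) 0 (1/4*n1 + 1/2*a) 0 (1/16*n2 + 1/16*n1 + 1/2*b + 1/8*a*n1 + 1/4*a^2*n1)" unfolding A3_def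
    by (rule jet_coeffs[OF jet_cmult[OF jet_add[OF jN1 jN2]]]) (simp_all add: field_simps power2_eq_square power3_eq_cube power4_eq_xxxx)
  have jD3: "jet D3 0 (1/2) 0 (-1/8*n1 - 1/2*a*n1) 0" unfolding D3_def
    by (rule jet_coeffs[OF jet_cmult[OF jet_diff[OF jN2 jN1]]]) (simp_all add: field_simps power2_eq_square power3_eq_cube power4_eq_xxxx)
  have jq3: "jet q3 0 (1/2) 0 (-1/4*n1 - 1/4*a - 1/2*a*n1) 0" unfolding q3_def
    by (rule jet_coeffs[OF jet_div[OF jD3 jA3]]) (simp_all add: field_simps power2_eq_square power3_eq_cube power4_eq_xxxx)
  have jF3: "jet (\<lambda>h. fK (q3 h)) (1) 0 (1/4*k1) 0 (1/16*k2 - 1/4*k1*n1 - 1/4*a*k1 - 1/2*a*k1*n1)"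
    by (rule jet_coeffs[OF jet_compose[OF jq3 fK rK]]) (simp_all add: field_simps power2_eq_square power3_eq_cube power4_eq_xxxx)
  have jR: "jet R (1) 0 (1/4*n1 + 1/4*k1 + 1/2*a) 0 (1/16*n2 + 1/16*n1 + 1/16*k2 - 3/16*k1*n1 + 1/2*b + 1/8*a*n1 - 1/8*a*k1 - 1/2*a*k1*n1 + 1/4*a^2*n1)" unfolding R_def
    by (rule jet_coeffs[OF jet_mult[OF jA3 jF3]]) (simp_all add: field_simps power2_eq_square power3_eq_cube power4_eq_xxxx)
  have "\<forall>\<^sub>F h in at 0. m h = R h"
    using eq by (simp add: R_def A3_def D3_def q3_def N1_def N2_def A1_def A2_def D1_def D2_def q1_def q2_def u_def v_def Let_def)
  from jet_unique[OF jet_cong_ev[OF jm this] jR] show ?thesis by simp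
qed

lemma mean_form:
  fixes P :: "real \<Rightarrow> real \<Rightarrow> real" and c :: "nat \<Rightarrow> real"
  assumes mean: "is_mean P" and sym: "symmetric_mean P" and hom: "homogeneous_mean P"
    and ex: "sym_asymp_expansion P c"
  shows "\<exists>r. (\<forall>x. P (1-x) (1+x) = 1 + c 1 * x^2 + c 2 * x^4 + x^4 * r x) \<and> isCont r 0 \<and> r 0 = 0"
proof -
  define f where "f = (\<lambda>x. P (1-x) (1+x))"
  define r0 where "r0 = (\<lambda>x. (f x - c 0 - c 1 * x^2 - c 2 * x^4) / x^4)"
  have mb: "\<And>s t. s > 0 \<Longrightarrow> t > 0 \<Longrightarrow> min s t \<le> P s t \<and> P s t \<le> max s t"
    using mean unfolding is_mean_def by blast
  have f0: "f 0 = 1" using mb[of 1 1] unfolding f_def by simp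
  have o: "(\<lambda>y. P (y - 1) (y + 1) - (\<Sum>n\<le>2. c n * 1 ^ (2 * n) * y powr (1 - 2 * real n)))
      \<in> o[at_top](\<lambda>y. y powr (1 - 2 * real (2::nat)))"
    by (rule ex[unfolded sym_asymp_expansion_def, rule_format])
  from smalloD_tendsto[OF o] have G: "((\<lambda>y. (P (y - 1) (y + 1) - (\<Sum>n\<le>2. c n * 1 ^ (2 * n) * y powr (1 - 2 * real n)))
      / y powr (1 - 2 * real (2::nat))) \<longlongrightarrow> 0) at_top" .
  from filterlim_compose[OF G filterlim_inverse_at_top_right]
  have G2: "((\<lambda>x. (P (inverse x - 1) (inverse x + 1) - (\<Sum>n\<le>2. c n * 1 ^ (2 * n) * inverse x powr (1 - 2 * real n)))
      / inverse x powr (1 - 2 * real (2::nat))) \<longlongrightarrow> 0) (at_right 0)" by simp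
  have ev01: "\<forall>\<^sub>F x in at_right (0::real). 0 < x \<and> x < 1"
    by (simp add: eventually_at_right_field) (auto intro: exI[of _ 1])
  have "\<forall>\<^sub>F x in at_right 0. (P (inverse x - 1) (inverse x + 1) - (\<Sum>n\<le>2. c n * 1 ^ (2 * n) * inverse x powr (1 - 2 * real n)))
      / inverse x powr (1 - 2 * real (2::nat)) = r0 x"
  proof (rule eventually_mono[OF ev01])
    fix x :: real assume x: "0 < x \<and> x < 1"
    have "P (inverse x * (1-x)) (inverse x * (1+x)) = inverse x * P (1-x) (1+x)"
      using hom x unfolding homogeneous_mean_def by simp
    moreover have "inverse x * (1-x) = inverse x - 1" "inverse x * (1+x) = inverse x + 1"
      using x by (simp_all add: field_simps)
    ultimately have h: "P (inverse x - 1) (inverse x + 1) = inverse x * f x" by (simp add: f_def)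
    have s: "(\<Sum>n\<le>2. c n * 1 ^ (2 * n) * inverse x powr (1 - 2 * real n)) =
        c 0 * inverse x + c 1 * x + c 2 * x^3"
      using x by (simp add: eval_nat_numeral powr_minus powr_neg_numeral powr_neg_one field_simps)
    have p: "inverse x powr (1 - 2 * real (2::nat)) = x^3"
      using x by (simp add: powr_neg_numeral field_simps)
    show "(P (inverse x - 1) (inverse x + 1) - (\<Sum>n\<le>2. c n * 1 ^ (2 * n) * inverse x powr (1 - 2 * real n)))
      / inverse x powr (1 - 2 * real (2::nat)) = r0 x"
      unfolding h s p r0_def using x by (simp add: field_simps eval_nat_numeral)
  qed
  from Lim_transform_eventually[OF G2 this] have rR: "(r0 \<longlongrightarrow> 0) (at_right 0)" .
  have fb: "\<forall>\<^sub>F x in at_right 0. 1 - x \<le> f x \<and> f x \<le> 1 + x"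
  proof (rule eventually_mono[OF ev01])
    fix x :: real assume x: "0 < x \<and> x < 1"
    then have "min (1-x) (1+x) \<le> f x \<and> f x \<le> max (1-x) (1+x)" using mb[of "1-x" "1+x"]
      unfolding f_def by simp
    then show "1 - x \<le> f x \<and> f x \<le> 1 + x" using x by (simp add: min_def max_def)
  qed
  have fR: "(f \<longlongrightarrow> 1) (at_right 0)"
  proof (rule real_tendsto_sandwich[of "\<lambda>x. 1 - x" f _ "\<lambda>x. 1 + x"])
    show "\<forall>\<^sub>F x in at_right 0. 1 - x \<le> f x" using fb by (auto elim: eventually_mono)
    show "\<forall>\<^sub>F x in at_right 0. f x \<le> 1 + x" using fb by (auto elim: eventually_mono)
    have "((\<lambda>x::real. 1 - x) \<longlongrightarrow> 1 - 0) (at_right 0)" by (intro tendsto_intros)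
    then show "((\<lambda>x::real. 1 - x) \<longlongrightarrow> 1) (at_right 0)" by simp
    have "((\<lambda>x::real. 1 + x) \<longlongrightarrow> 1 + 0) (at_right 0)" by (intro tendsto_intros)
    then show "((\<lambda>x::real. 1 + x) \<longlongrightarrow> 1) (at_right 0)" by simp
  qed
  have "((\<lambda>x. f x - x^4 * r0 x - c 1 * x^2 - c 2 * x^4) \<longlongrightarrow> 1 - 0^4 * 0 - c 1 * 0^2 - c 2 * 0^4) (at_right 0)"
    by (intro tendsto_intros fR rR)
  then have l1: "((\<lambda>x. f x - x^4 * r0 x - c 1 * x^2 - c 2 * x^4) \<longlongrightarrow> 1) (at_right 0)" by simp
  have "\<forall>\<^sub>F x in at_right 0. f x - x^4 * r0 x - c 1 * x^2 - c 2 * x^4 = c 0"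
    by (rule eventually_mono[OF ev01]) (simp add: r0_def)
  from Lim_transform_eventually[OF l1 this] have "((\<lambda>x. c 0) \<longlongrightarrow> 1) (at_right (0::real))" .
  then have c0: "c 0 = 1" by (simp add: tendsto_const_iff)
  have "\<forall>\<^sub>F x in at_right 0. r0 x = r0 (- x)"
  proof (rule eventually_mono[OF ev01])
    fix x :: real assume x: "0 < x \<and> x < 1"
    have "f (-x) = f x" using sym x unfolding symmetric_mean_def f_def by simp
    then show "r0 x = r0 (- x)" by (simp add: r0_def)
  qed
  from Lim_transform_eventually[OF rR this] have "((\<lambda>x. r0 (-x)) \<longlongrightarrow> 0) (at_right (- 0))" by simp
  then have rL: "(r0 \<longlongrightarrow> 0) (at_left 0)" by (simp add: filterlim_at_left_to_right[of r0 _ 0])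
  have r00: "r0 0 = 0" by (simp add: r0_def)
  have rc: "isCont r0 0" unfolding isCont_def r00 by (rule filterlim_split_at[OF rL rR])
  have "\<forall>x. P (1-x) (1+x) = 1 + c 1 * x^2 + c 2 * x^4 + x^4 * r0 x"
  proof
    fix x :: real
    show "P (1-x) (1+x) = 1 + c 1 * x^2 + c 2 * x^4 + x^4 * r0 x"
    proof (cases "x = 0")
      case True then show ?thesis using f0 by (simp add: f_def)
    next
      case False then show ?thesis by (simp add: r0_def c0 f_def field_simps)
    qed
  qed
  with rc r00 show ?thesis by blast
qed

lemma alg:
  fixes a b kA kB nA nB :: real
  assumes e1: "a = 1/4*nA + 1/4*kA + 1/2*a"
    and e2: "b = 1/16*nB + 1/16*nA + 1/16*kB - 3/16*kA*nA + 1/2*b + 1/8*a*nA - 1/8*a*kA - 1/2*a*kA*nA + 1/4*a^2*nA"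
    and e3: "b = 1/16*kB + 1/16*kA + 1/16*nB - 3/16*nA*kA + 1/2*b + 1/8*a*kA - 1/8*a*nA - 1/2*a*nA*kA + 1/4*a^2*kA"
    and e4: "kB = 1/16*kB + 1/16*kA + 1/16*kB - 3/16*kA*kA + 1/2*kB + 1/8*kA*kA - 1/8*kA*kA - 1/2*kA*kA*kA + 1/4*kA^2*kA"
    and e5: "nB = 1/16*nB + 1/16*nA + 1/16*nB - 3/16*nA*nA + 1/2*nB + 1/8*nA*nA - 1/8*nA*nA - 1/2*nA*nA*nA + 1/4*nA^2*nA"
  shows "(kA = nA \<and> a = kA \<and> a = nA \<and> b = 1/6 * a * (1 + a) * (1 - 4 * a))
       \<or> (kA + nA = -1 \<and> a = -1/2 \<and> b = -1/8)"
proof -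
  have "(nA - kA) * (2*a+1)^2 = 0" using e1 e2 e3 by algebra
  then consider "nA = kA" | "2*a+1 = 0" by auto
  then show ?thesis
  proof cases
    case 1
    then have "a = kA" using e1 by simp
    have kB: "kB = (kA - 3*kA^2 - 4*kA^3)/6" using e4 by (simp add: field_simps power2_eq_square power3_eq_cube)
    have nB: "nB = (nA - 3*nA^2 - 4*nA^3)/6" using e5 by (simp add: field_simps power2_eq_square power3_eq_cube)
    have "b = 1/6 * a * (1 + a) * (1 - 4 * a)" using e2 unfolding kB nB \<open>nA = kA\<close> \<open>a = kA\<close>
      by (simp add: field_simps power2_eq_square power3_eq_cube)
    moreover note \<open>a = kA\<close>
    ultimately show ?thesis using 1 by simp
  next
    case 2
    then have a: "a = -1/2" by simp
    then have "kA + nA = -1" using e1 by simp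
    have kB: "kB = (kA - 3*kA^2 - 4*kA^3)/6" using e4 by (simp add: field_simps power2_eq_square power3_eq_cube)
    have nB: "nB = (nA - 3*nA^2 - 4*nA^3)/6" using e5 by (simp add: field_simps power2_eq_square power3_eq_cube)
    have nA: "nA = -1 - kA" using \<open>kA + nA = -1\<close> by simp
    have "b = -1/8" using e2 unfolding kB nB a nA
      by (simp add: field_simps power2_eq_square power3_eq_cube)
    then show ?thesis using a \<open>kA + nA = -1\<close> by simp
  qed
qed

lemma hom_form:
  assumes mean: "is_mean P" and hom: "homogeneous_mean P" and u: "u > 0" and v: "v > 0"
  shows "P u v = 1/2 * (u + v) * P (1 - (1/2 * (v - u)) / (1/2 * (u + v))) (1 + (1/2 * (v - u)) / (1/2 * (u + v)))"
proof -
  define l where "l = 1/2 * (u + v)"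
  have l: "l > 0" using u v by (simp add: l_def)
  have s: "1 - (1/2 * (v - u)) / l = u / l" using u v by (simp add: l_def field_simps)
  have t: "1 + (1/2 * (v - u)) / l = v / l" using u v by (simp add: l_def field_simps)
  have "P (l * (u/l)) (l * (v/l)) = l * P (u/l) (v/l)"
    using hom[unfolded homogeneous_mean_def, rule_format, of l "u/l" "v/l"] l u v by simp
  then show ?thesis using l unfolding l_def[symmetric] unfolding s t by simp
qed

lemma stab_eq:
  assumes mK: "is_mean K" and hK: "homogeneous_mean K" and mN: "is_mean N" and hN: "homogeneous_mean N"
    and mM: "is_mean M" and st: "stabilized K N M"
    and fK: "fK = (\<lambda>x. K (1-x) (1+x))" and fN: "fN = (\<lambda>x. N (1-x) (1+x))"
    and m: "m = (\<lambda>x. M (1-x) (1+x))"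
  shows "\<forall>\<^sub>F h in at 0. m h =
      (let N1 = 1/2 * ((1 - h) + m h) * fN ((1/2 * (m h - (1 - h))) / (1/2 * ((1 - h) + m h)));
           N2 = 1/2 * (m h + (1 + h)) * fN ((1/2 * ((1 + h) - m h)) / (1/2 * (m h + (1 + h))))
       in 1/2 * (N1 + N2) * fK ((1/2 * (N2 - N1)) / (1/2 * (N1 + N2))))"
proof -
  have ev: "\<forall>\<^sub>F h in at (0::real). -1 < h \<and> h < 1"
    unfolding eventually_at by (intro exI[of _ 1]) (auto simp: dist_real_def)
  show ?thesis
  proof (rule eventually_mono[OF ev])
    fix h :: real assume h: "-1 < h \<and> h < 1"
    define mh where "mh = M (1-h) (1+h)"
    have mh: "mh > 0" using mM h unfolding is_mean_def mh_def by simp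
    define X where "X = N (1-h) mh"
    define Y where "Y = N mh (1+h)"
    have X: "X > 0" using mN h mh unfolding is_mean_def X_def by simp
    have Y: "Y > 0" using mN h mh unfolding is_mean_def Y_def by simp
    have e: "mh = K X Y" using st h unfolding stabilized_def mh_def X_def Y_def by simp
    have hX: "X = 1/2 * ((1 - h) + mh) * fN ((1/2 * (mh - (1 - h))) / (1/2 * ((1 - h) + mh)))"
      unfolding X_def fN using hom_form[OF mN hN, of "1-h" mh] h mh by simp
    have hY: "Y = 1/2 * (mh + (1 + h)) * fN ((1/2 * ((1 + h) - mh)) / (1/2 * (mh + (1 + h))))"
      unfolding Y_def fN using hom_form[OF mN hN, of mh "1+h"] h mh by simp
    have hKXY: "K X Y = 1/2 * (X + Y) * fK ((1/2 * (Y - X)) / (1/2 * (X + Y)))"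
      unfolding fK using hom_form[OF mK hK X Y] by simp
    have mm: "m h = mh" unfolding m mh_def by simp
    show "m h =
      (let N1 = 1/2 * ((1 - h) + m h) * fN ((1/2 * (m h - (1 - h))) / (1/2 * ((1 - h) + m h)));
           N2 = 1/2 * (m h + (1 + h)) * fN ((1/2 * ((1 + h) - m h)) / (1/2 * (m h + (1 + h))))
       in 1/2 * (N1 + N2) * fK ((1/2 * (N2 - N1)) / (1/2 * (N1 + N2))))"
      unfolding mm Let_def hX[symmetric] hY[symmetric] hKXY[symmetric] by (rule e)
  qed
qed

theorem mainTheorem10:
  fixes K N M :: "real \<Rightarrow> real \<Rightarrow> real" and aK aN aM :: "nat \<Rightarrow> real"
  assumes "is_mean K" "symmetric_mean K" "homogeneous_mean K" "stable_mean K"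
      and "is_mean N" "symmetric_mean N" "homogeneous_mean N" "stable_mean N"
      and "is_mean M" "symmetric_mean M" "homogeneous_mean M"
      and "sym_asymp_expansion K aK" "sym_asymp_expansion N aN" "sym_asymp_expansion M aM"
      and "stabilized K N M" "stabilized N K M"
  shows "(aK 1 = aN 1 \<and> aM 1 = aK 1 \<and> aM 1 = aN 1 \<and>
            aM 2 = 1/6 * aM 1 * (1 + aM 1) * (1 - 4 * aM 1))
       \<or> (aK 1 + aN 1 = -1 \<and> aM 1 = -1/2 \<and> aM 2 = -1/8)"
proof -
  note A = assms
  define fK where "fK = (\<lambda>x. K (1-x) (1+x))"
  define fN where "fN = (\<lambda>x. N (1-x) (1+x))"
  define m where "m = (\<lambda>x. M (1-x) (1+x))"
  obtain rK where rK: "\<forall>x. K (1-x) (1+x) = 1 + aK 1 * x^2 + aK 2 * x^4 + x^4 * rK x" "isCont rK 0" "rK 0 = 0"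
    using mean_form[OF A(1) A(2) A(3) A(12)] by blast
  obtain rN where rN: "\<forall>x. N (1-x) (1+x) = 1 + aN 1 * x^2 + aN 2 * x^4 + x^4 * rN x" "isCont rN 0" "rN 0 = 0"
    using mean_form[OF A(5) A(6) A(7) A(13)] by blast
  obtain rM where rM: "\<forall>x. M (1-x) (1+x) = 1 + aM 1 * x^2 + aM 2 * x^4 + x^4 * rM x" "isCont rM 0" "rM 0 = 0"
    using mean_form[OF A(9) A(10) A(11) A(14)] by blast
  have fKf: "\<And>x. fK x = 1 + aK 1 * x^2 + aK 2 * x^4 + x^4 * rK x" using rK(1) by (simp add: fK_def)
  have fNf: "\<And>x. fN x = 1 + aN 1 * x^2 + aN 2 * x^4 + x^4 * rN x" using rN(1) by (simp add: fN_def)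
  have mf: "\<And>x. m x = 1 + aM 1 * x^2 + aM 2 * x^4 + x^4 * rM x" using rM(1) by (simp add: m_def)
  have jm: "jet m 1 0 (aM 1) 0 (aM 2)"
    using jet_compose[OF jet_id mf rM(2,3)] by simp
  have jK: "jet fK 1 0 (aK 1) 0 (aK 2)"
    using jet_compose[OF jet_id fKf rK(2,3)] by simp
  have jN: "jet fN 1 0 (aN 1) 0 (aN 2)"
    using jet_compose[OF jet_id fNf rN(2,3)] by simp
  have sK: "stabilized K K K" using A(4) by (simp add: stable_mean_def stabilized_def)
  have sN: "stabilized N N N" using A(8) by (simp add: stable_mean_def stabilized_def)
  note c1 = core[OF fKf rK(2,3) fNf rN(2,3) jm stab_eq[OF A(1) A(3) A(5) A(7) A(9) A(15) fK_def fN_def m_def]]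
  note c2 = core[OF fNf rN(2,3) fKf rK(2,3) jm stab_eq[OF A(5) A(7) A(1) A(3) A(9) A(16) fN_def fK_def m_def]]
  note c3 = core[OF fKf rK(2,3) fKf rK(2,3) jK stab_eq[OF A(1) A(3) A(1) A(3) A(1) sK fK_def fK_def fK_def]]
  note c4 = core[OF fNf rN(2,3) fNf rN(2,3) jN stab_eq[OF A(5) A(7) A(5) A(7) A(5) sN fN_def fN_def fN_def]]
  from alg[where a="aM 1" and b="aM 2" and kA="aK 1" and kB="aK 2" and nA="aN 1" and nB="aN 2"] c1 c2 c3 c4
  show ?thesis by blast
qed

end
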